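(* Let $P=[0,1]$, let $l$ be a positive integer, $r=2^l-1$, $\sigma_r=\sum_{i=r+1}^{2r+1}\frac1i$, and $Q=\{q_1,\dots,q_r\}$ with $q_i=\frac{1}{\sigma_r}\sum_{j=r+1}^{r+i}\frac1j$. Then there exists an ordering $\tau$ of $Q$ such that the following online algorithm satisfies $OPT_A(S;P)\le 2\sigma_r\cdot\min_{t\le T}d_{min}(t;X)$ (with $X$ its output) for every instance $S$ whose maximum number $m$ of simultaneously present points satisfies $m\le r$. The algorithm maintains a set $\hat Q$ of positions ever used, each labelled occupied or vacant (initially empty); when a point departs its position becomes vacant; when a point arrives, if some position in $\hat Q$ is vacant the point is put at an arbitrary vacant position (now occupied); otherwise, if $Q\not\subseteq\hat Q$ the point is put at the first position of $Q\setminus\hat Q$ according to $\tau$, and if $Q\subseteq\hat Q$ it is put at the midpoint of a largest interval into which $[0,1]$ is divided by $\hat Q$; in both latter cases the new position is added to $\hat Q$ as occupied.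
   Context: Distances are Euclidean; $\partial P=\{0,1\}$. An instance is a sequence $S=((s_1,d_1),\dots,(s_n,d_n))$ with $s_i<d_i$, $0=s_1\le\dots\le s_n$; point $i$ is present at time $t$ iff $s_i\le t\le d_i$; $T=\max_i d_i$; $m=\max_{t\le T}|\{i:s_i\le t\le d_i\}|$. For locations $X=(X_1,\dots,X_n)\in P^n$, $d_{min}(t;X)=\min\{dis(X_i,\partial P),dis(X_i,X_j)\}$ over present points $i\ne j$ at time $t$, and $OPT_A(S;P)=\max_X\min_{t\le T}d_{min}(t;X)$. The algorithm is online: it places each arriving point irrevocably without knowing future events. *)

theory Defs
  imports Complex_Main
begin

(* An instance is a list of (arrival, departure) pairs; point i (i < length S)
   is present at time t iff s_i <= t <= d_i. *)

definition valid_instance :: "(real \<times> real) list \<Rightarrow> bool" where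
  "valid_instance S \<longleftrightarrow> S \<noteq> [] \<and> (\<forall>i<length S. fst (S!i) < snd (S!i))
     \<and> fst (S!0) = 0 \<and> sorted (map fst S)"

definition present :: "(real \<times> real) list \<Rightarrow> nat \<Rightarrow> real \<Rightarrow> bool" where
  "present S i t \<longleftrightarrow> fst (S!i) \<le> t \<and> t \<le> snd (S!i)"

definition horizon :: "(real \<times> real) list \<Rightarrow> real" where
  "horizon S = Max (snd ` set S)"

definition max_simul :: "(real \<times> real) list \<Rightarrow> nat" where
  "max_simul S = Max ((\<lambda>t. card {i. i < length S \<and> present S i t}) ` {t. t \<le> horizon S})"

definition dist_bd :: "real \<Rightarrow> real" where
  "dist_bd x = min (dist x 0) (dist x 1)"

(* d_min(t;X), for times t at which at least one point is present *)
definition d_min :: "(real \<times> real) list \<Rightarrow> (nat \<Rightarrow> real) \<Rightarrow> real \<Rightarrow> real" where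
  "d_min S X t = Min ({dist_bd (X i) | i. i < length S \<and> present S i t}
      \<union> {dist (X i) (X j) | i j. i < length S \<and> j < length S \<and> i \<noteq> j
                              \<and> present S i t \<and> present S j t})"

(* min_{t <= T} d_min(t;X); times with no present point contribute +infinity (ignored) *)
definition min_dmin :: "(real \<times> real) list \<Rightarrow> (nat \<Rightarrow> real) \<Rightarrow> real" where
  "min_dmin S X = Inf (d_min S X ` {t. t \<le> horizon S \<and> (\<exists>i<length S. present S i t)})"

definition OPT_A :: "(real \<times> real) list \<Rightarrow> real" where
  "OPT_A S = Sup (min_dmin S ` {X. \<forall>i<length S. X i \<in> {0..1}})"

definition sigma_r :: "nat \<Rightarrow> real" where
  "sigma_r r = (\<Sum>i = r+1..2*r+1. 1 / real i)"

definition qpos :: "nat \<Rightarrow> nat \<Rightarrow> real" where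
  "qpos r i = (1 / sigma_r r) * (\<Sum>j = r+1..r+i. 1 / real j)"

definition Qset :: "nat \<Rightarrow> real set" where
  "Qset r = qpos r ` {1..r}"

definition consec :: "real set \<Rightarrow> real \<Rightarrow> real \<Rightarrow> bool" where
  "consec H a b \<longleftrightarrow> a \<in> insert 0 (insert 1 H) \<and> b \<in> insert 0 (insert 1 H) \<and> a < b
     \<and> \<not> (\<exists>c \<in> insert 0 (insert 1 H). a < c \<and> c < b)"

definition largest_gap_mid :: "real set \<Rightarrow> real \<Rightarrow> bool" where
  "largest_gap_mid H x \<longleftrightarrow> (\<exists>a b. consec H a b \<and> x = (a + b) / 2
     \<and> (\<forall>a' b'. consec H a' b' \<longrightarrow> b' - a' \<le> b - a))"

(* X is a possible output of the online algorithm (with ordering tau of Q) on S.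
   Points arrive in index order.  When point i arrives, Qhat = positions used by
   points j < i; occupied = positions of points j < i still present at time s_i. *)
definition alg_run :: "real set \<Rightarrow> real list \<Rightarrow> (real \<times> real) list \<Rightarrow> (nat \<Rightarrow> real) \<Rightarrow> bool" where
  "alg_run Q tau S X \<longleftrightarrow> (\<forall>i<length S.
     (let H = X ` {..<i};
          Occ = X ` {j. j < i \<and> fst (S!i) \<le> snd (S!j)};
          V = H - Occ
      in (V \<noteq> {} \<longrightarrow> X i \<in> V)
       \<and> (V = {} \<and> \<not> Q \<subseteq> H \<longrightarrow> X i = hd (filter (\<lambda>q. q \<notin> H) tau))
       \<and> (V = {} \<and> Q \<subseteq> H \<longrightarrow> largest_gap_mid H (X i))))"

end

theory Submission imports Defs begin

lemma T_shift: "(\<Sum>j = r+1..r+i. 1 / real j) = (\<Sum>j<i. 1 / real (r+1+j))"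
proof (induction i)
  case 0 then show ?case by simp
next
  case (Suc i)
  have "(\<Sum>j = r+1..r+Suc i. 1 / real j) = (\<Sum>j = r+1..r+i. 1 / real j) + 1/real (r+1+i)"
    by (simp add: sum.cl_ivl_Suc)
  then show ?case using Suc by simp
qed

lemma sigma_alt: "sigma_r r = (\<Sum>j<r+1. 1 / real (r+1+j))"
proof -
  have e: "2*r+1 = r+(r+1)" by simp
  have "sigma_r r = (\<Sum>j = r+1..r+(r+1). 1 / real j)" unfolding sigma_r_def e ..
  also have "\<dots> = (\<Sum>j<r+1. 1 / real (r+1+j))" by (rule T_shift)
  finally show ?thesis .
qed

lemma sigma_pos: "sigma_r r > 0"
  unfolding sigma_alt by (intro sum_pos) auto

lemma qpos_alt: "qpos r i = (\<Sum>j<i. 1 / real (r+1+j)) / sigma_r r"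
  unfolding qpos_def T_shift by simp

lemma qpos_0: "qpos r 0 = 0" by (simp add: qpos_alt)

lemma qpos_top: "qpos r (r+1) = 1"
  using sigma_pos[of r] by (simp only: qpos_alt sigma_alt[symmetric]) simp

lemma qpos_diff:
  assumes "x \<le> c"
  shows "qpos r c - qpos r x = (\<Sum>j\<in>{x..<c}. 1 / real (r+1+j)) / sigma_r r"
proof -
  have "(\<Sum>j<c. 1 / real (r+1+j)) = (\<Sum>j<x. 1 / real (r+1+j)) + (\<Sum>j\<in>{x..<c}. 1 / real (r+1+j))"
    using sum.atLeastLessThan_concat[of 0 x c "\<lambda>j. 1 / real (r+1+j)"] assms
    by (simp add: lessThan_atLeast0)
  then show ?thesis by (simp add: qpos_alt add_divide_distrib)
qed

lemma qpos_diff_ge: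
  assumes "x < c"
  shows "qpos r c - qpos r x \<ge> real (c - x) / (real (r + c) * sigma_r r)"
proof -
  have "real (card {x..<c}) * (1 / real (r+c)) \<le> (\<Sum>j\<in>{x..<c}. 1 / real (r+1+j))"
    by (rule sum_bounded_below) (auto simp: frac_le)
  then have "real (c - x) / real (r+c) \<le> (\<Sum>j\<in>{x..<c}. 1 / real (r+1+j))" by simp
  then show ?thesis using qpos_diff[of x c r] assms sigma_pos[of r]
    by (simp add: divide_right_mono flip: divide_divide_eq_left)
qed

lemma qpos_less: "x < y \<Longrightarrow> qpos r x < qpos r y"
proof -
  assume "x < y"
  then have "0 < real (y - x) / (real (r + y) * sigma_r r)" using sigma_pos[of r] by simp
  then show ?thesis using qpos_diff_ge[OF \<open>x<y\<close>, of r] by linarith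
qed

lemma qpos_mono: "x \<le> y \<Longrightarrow> qpos r x \<le> qpos r y"
  by (metis order_le_less qpos_less)

lemma inj_qpos: "inj (qpos r)"
  by (rule strict_mono_imp_inj_on) (simp add: strict_mono_def qpos_less)

definition lev :: "nat \<Rightarrow> nat \<Rightarrow> nat list" where
  "lev l a = map (\<lambda>c. (2*c+1) * 2^(l-a-1)) [0..<2^a]"

definition idxu :: "nat \<Rightarrow> nat \<Rightarrow> nat list" where
  "idxu l a = concat (map (lev l) [0..<a])"

lemma idxu_Suc: "idxu l (Suc a) = idxu l a @ lev l a"
  by (simp add: idxu_def)

lemma length_lev: "length (lev l a) = 2^a"
  by (simp add: lev_def)

lemma length_idxu: "length (idxu l a) = 2^a - 1"
proof (induction a)
  case 0 then show ?case by (simp add: idxu_def)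
next
  case (Suc a)
  have "(1::nat) \<le> 2^a" by simp
  then show ?case using Suc by (simp add: idxu_Suc length_lev)
qed

lemma img_step:
  fixes P A :: nat
  shows "(\<lambda>m. m*(2*P)) ` {m. 0<m \<and> m<A} \<union> (\<lambda>c. (2*c+1)*P) ` {..<A}
       = (\<lambda>m. m*P) ` {m. 0<m \<and> m<2*A}"
proof (intro equalityI subsetI)
  fix x assume "x \<in> (\<lambda>m. m*(2*P)) ` {m. 0<m \<and> m<A} \<union> (\<lambda>c. (2*c+1)*P) ` {..<A}"
  then show "x \<in> (\<lambda>m. m*P) ` {m. 0<m \<and> m<2*A}"
  proof
    assume "x \<in> (\<lambda>m. m*(2*P)) ` {m. 0<m \<and> m<A}"
    then obtain m where "0<m" "m<A" "x = m*(2*P)" by auto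
    then show ?thesis by (intro image_eqI[of _ _ "2*m"]) auto
  next
    assume "x \<in> (\<lambda>c. (2*c+1)*P) ` {..<A}"
    then obtain c where "c<A" "x = (2*c+1)*P" by auto
    then show ?thesis by (intro image_eqI[of _ _ "2*c+1"]) auto
  qed
next
  fix x assume "x \<in> (\<lambda>m. m*P) ` {m. 0<m \<and> m<2*A}"
  then obtain m where m: "0<m" "m<2*A" "x = m*P" by auto
  show "x \<in> (\<lambda>m. m*(2*P)) ` {m. 0<m \<and> m<A} \<union> (\<lambda>c. (2*c+1)*P) ` {..<A}"
  proof (cases "even m")
    case True
    then obtain m' where "m = 2*m'" by auto
    then show ?thesis using m by (intro UnI1 image_eqI[of _ _ m']) auto
  next
    case False
    then obtain c where "m = 2*c+1" using oddE by blast
    then show ?thesis using m by (intro UnI2 image_eqI[of _ _ c]) auto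
  qed
qed

lemma set_idxu: "a \<le> l \<Longrightarrow> set (idxu l a) = (\<lambda>m. m * 2^(l-a)) ` {m. 0<m \<and> m<2^a}"
proof (induction a)
  case 0 then show ?case by (auto simp: idxu_def)
next
  case (Suc a)
  then have IH: "set (idxu l a) = (\<lambda>m. m * 2^(l-a)) ` {m. 0<m \<and> m<2^a}" by simp
  obtain e where e: "l - a = Suc e" "l - a - 1 = e" "l - Suc a = e" using Suc.prems
    by (metis Suc_diff_Suc Suc_le_lessD diff_Suc_1 diff_diff_left plus_1_eq_Suc)
  have "set (idxu l (Suc a)) = (\<lambda>m. m*(2*2^e)) ` {m. 0<m \<and> m<2^a} \<union> (\<lambda>c. (2*c+1)*2^e) ` {..<2^a}"
    using IH e by (simp add: idxu_Suc lev_def atLeast0LessThan)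
  also have "\<dots> = (\<lambda>m. m*2^e) ` {m. 0<m \<and> m<2*2^a}" by (rule img_step)
  finally show ?case using e by simp
qed

lemma take_idx:
  assumes "a < l" "s \<le> 2^a"
  shows "take (2^a - 1 + s) (idxu l l) = idxu l a @ take s (lev l a)"
proof -
  have "[0..<l] = [0..<a] @ [a..<l]" using upt_add_eq_append[of 0 a "l-a"] assms by simp
  moreover have "[a..<l] = a # [Suc a..<l]" using assms by (simp add: upt_conv_Cons)
  ultimately have "[0..<l] = [0..<a] @ a # [Suc a..<l]" by simp
  then have "idxu l l = idxu l a @ lev l a @ concat (map (lev l) [Suc a..<l])"
    by (simp add: idxu_def)
  then show ?thesis using assms by (simp add: length_idxu length_lev)
qed

lemma img_final:
  fixes M A s :: nat
  assumes "s \<le> A"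
  shows "(\<lambda>m. m*(2*M)) ` {m. 0<m \<and> m<A} \<union> (\<lambda>c. (2*c+1)*M) ` {..<s} \<union> {0, 2*A*M}
       = (\<lambda>m. m*M) ` {m. m \<le> 2*A \<and> (even m \<or> m < 2*s)}"
proof (intro equalityI subsetI)
  fix x assume "x \<in> (\<lambda>m. m*(2*M)) ` {m. 0<m \<and> m<A} \<union> (\<lambda>c. (2*c+1)*M) ` {..<s} \<union> {0, 2*A*M}"
  then consider (a) m where "0<m" "m<A" "x = m*(2*M)" | (b) c where "c<s" "x = (2*c+1)*M"
    | (c) "x = 0" | (d) "x = 2*A*M" by auto
  then show "x \<in> (\<lambda>m. m*M) ` {m. m \<le> 2*A \<and> (even m \<or> m < 2*s)}"
  proof cases
    case a then show ?thesis by (intro image_eqI[of _ _ "2*m"]) auto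
  next
    case b then show ?thesis using assms by (intro image_eqI[of _ _ "2*c+1"]) auto
  next
    case c then show ?thesis by (intro image_eqI[of _ _ 0]) auto
  next
    case d then show ?thesis by (intro image_eqI[of _ _ "2*A"]) auto
  qed
next
  fix x assume "x \<in> (\<lambda>m. m*M) ` {m. m \<le> 2*A \<and> (even m \<or> m < 2*s)}"
  then obtain m where m: "m \<le> 2*A" "even m \<or> m < 2*s" "x = m*M" by auto
  show "x \<in> (\<lambda>m. m*(2*M)) ` {m. 0<m \<and> m<A} \<union> (\<lambda>c. (2*c+1)*M) ` {..<s} \<union> {0, 2*A*M}"
  proof (cases "even m")
    case True
    then obtain m' where m': "m = 2*m'" by auto
    show ?thesis
    proof (cases "m' = 0")
      case True then show ?thesis using m m' by auto
    next
      case False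
      show ?thesis
      proof (cases "m' = A")
        case True then show ?thesis using m m' by auto
      next
        case False
        then have "m' < A" using m m' by auto
        then show ?thesis using m m' \<open>m' \<noteq> 0\<close> by (intro UnI1 UnI1 image_eqI[of _ _ m']) auto
      qed
    qed
  next
    case False
    then obtain c where c: "m = 2*c+1" using oddE by blast
    then have "c < s" using m False by auto
    then show ?thesis using m c by (intro UnI1 UnI2 image_eqI[of _ _ c]) auto
  qed
qed

lemma good_m:
  fixes A s x y :: nat
  assumes "s \<le> A"
    and "x \<le> 2*A" "even x \<or> x < 2*s"
    and "y \<le> 2*A" "even y \<or> y < 2*s"
    and "x < y"
  shows "\<exists>c. c \<le> 2*A \<and> (even c \<or> c < 2*s) \<and> x < c \<and> c \<le> y \<and> 2*(A+s)*(c-x) \<ge> 2*A + c"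
proof (cases "x < 2*s")
  case True
  then show ?thesis
  proof (cases "even x")
    case True
    then show ?thesis using \<open>x < 2*s\<close> assms
      by (intro exI[of _ "x+1"]) (auto elim!: evenE)
  next
    case False
    then show ?thesis using \<open>x < 2*s\<close> assms
      by (intro exI[of _ "x+1"]) (auto elim!: oddE)
  qed
next
  case False
  then have ex: "even x" using assms by auto
  have "y \<noteq> x + 1" using ex assms False by auto
  then have "x + 2 \<le> y" using assms by auto
  then show ?thesis using ex assms False
    by (intro exI[of _ "x+2"]) auto
qed


lemma exists_level:
  "0 < l \<Longrightarrow> (K::nat) \<le> 2^l - 1 \<Longrightarrow> \<exists>a<l. 2^a \<le> K+1 \<and> K+1 \<le> 2^(a+1)"
proof (induction l arbitrary: K)
  case 0 then show ?case by simp
next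
  case (Suc l)
  show ?case
  proof (cases "K+1 \<le> 2^l")
    case True
    show ?thesis
    proof (cases "l = 0")
      case True then show ?thesis using Suc.prems by (intro exI[of _ 0]) auto
    next
      case False
      then obtain a where "a<l" "2^a \<le> K+1 \<and> K+1 \<le> 2^(a+1)"
        using Suc.IH[of K] True by fastforce
      then show ?thesis by (intro exI[of _ a]) auto
    qed
  next
    case False
    have p: "(2::nat)^Suc l \<ge> 1" by simp
    have "K+1 \<le> 2^Suc l" using Suc.prems(2) p by linarith
    then show ?thesis using False by (intro exI[of _ l]) auto
  qed
qed

lemma real_step:
  fixes sg :: real and d R k :: nat
  assumes "sg > 0" "R > 0" "R \<le> 2*k*d" "k > 0"
  shows "1 / (2 * sg * real k) \<le> real d / (real R * sg)"
proof -
  have "real R \<le> 2 * real k * real d" using assms(3) by (metis of_nat_mono of_nat_mult of_nat_numeral)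
  then have "real R * sg \<le> 2 * real k * real d * sg" using assms(1) by (simp add: mult_right_mono)
  then show ?thesis using assms by (simp add: divide_simps mult.commute mult.left_commute)
qed

lemma sep_main:
  assumes "0 < l" "K \<le> 2^l - 1"
    and "u \<in> set (take K (idxu l l)) \<union> {0, 2^l}" "v \<in> set (take K (idxu l l)) \<union> {0, 2^l}"
    and "u < v"
  shows "qpos (2^l - 1) v - qpos (2^l - 1) u \<ge> 1 / (2 * sigma_r (2^l - 1) * real (K+1))"
proof -
  define r where "r = (2::nat)^l - 1"
  obtain a where a: "a < l" "2^a \<le> K+1" "K+1 \<le> 2^(a+1)" using exists_level[OF assms(1,2)] by blast
  define s where "s = K + 1 - 2^a"
  define A where "A = (2::nat)^a"
  define M where "M = (2::nat)^(l-a-1)"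
  have sA: "s \<le> A" using a by (simp add: s_def A_def)
  have K: "K = 2^a - 1 + s" using a by (simp add: s_def)
  have M2: "(2::nat)^(l-a) = 2*M" unfolding M_def using a
    by (metis Suc_diff_Suc diff_Suc_1 diff_diff_left plus_1_eq_Suc power_Suc)
  have N: "(2::nat)^l = 2*A*M"
  proof -
    have "(2::nat)^l = 2^a * 2^(l-a)" using a by (simp flip: power_add)
    then show ?thesis using M2 A_def by simp
  qed
  have Mpos: "M > 0" by (simp add: M_def)
  have "r + 1 = 2^l" unfolding r_def by simp
  then have r: "r + 1 = 2*A*M" using N by simp
  have "set (take K (idxu l l)) = set (idxu l a) \<union> set (take s (lev l a))"
    using take_idx[OF a(1), of s] sA K A_def by simp
  also have "\<dots> = (\<lambda>m. m*(2*M)) ` {m. 0<m \<and> m<A} \<union> (\<lambda>c. (2*c+1)*M) ` {..<s}"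
    using set_idxu[of a l] a M2 sA unfolding A_def
    by (simp add: lev_def take_map M_def min_def atLeast0LessThan)
  finally have "set (take K (idxu l l)) \<union> {0, 2^l} = (\<lambda>m. m*M) ` {m. m \<le> 2*A \<and> (even m \<or> m < 2*s)}"
    using img_final[OF sA, of M] N by simp
  then obtain x y where xy: "x \<le> 2*A" "even x \<or> x < 2*s" "y \<le> 2*A" "even y \<or> y < 2*s"
      "u = x*M" "v = y*M"
    using assms(3,4) by auto
  have "x < y" using xy assms(5) Mpos by auto
  obtain c where c: "x < c" "c \<le> y" "2*(A+s)*(c-x) \<ge> 2*A + c"
    using good_m[OF sA xy(1,2,3,4) \<open>x<y\<close>] by blast
  have "qpos r (y*M) \<ge> qpos r (c*M)" using c Mpos by (intro qpos_mono) simp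
  moreover have "qpos r (c*M) - qpos r (x*M) \<ge> real (c*M - x*M) / (real (r + c*M) * sigma_r r)"
    using c Mpos by (intro qpos_diff_ge) simp
  moreover have "real (c*M - x*M) / (real (r + c*M) * sigma_r r) \<ge> 1 / (2 * sigma_r r * real (K+1))"
  proof (rule real_step[OF sigma_pos])
    show "r + c*M > 0" using c Mpos by simp
    have "2*(A+s)*(c-x)*M \<ge> (2*A + c)*M" using c by simp
    then show "r + c*M \<le> 2*(K+1)*(c*M - x*M)"
      using r a by (simp add: K A_def algebra_simps diff_mult_distrib)
  qed simp
  ultimately show ?thesis unfolding xy(5,6) r_def by linarith
qed

definition cnt :: "(real \<times> real) list \<Rightarrow> real \<Rightarrow> nat" where
  "cnt S t = card {i. i < length S \<and> present S i t}"

lemma hor_ge: "i < length S \<Longrightarrow> snd (S!i) \<le> horizon S"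
  unfolding horizon_def by (intro Max_ge) auto

lemma sorted_fst: "valid_instance S \<Longrightarrow> i \<le> j \<Longrightarrow> j < length S \<Longrightarrow> fst (S!i) \<le> fst (S!j)"
  unfolding valid_instance_def
  using sorted_nth_mono[of "map fst S" i j] by auto

lemma cnt_le_max: "t \<le> horizon S \<Longrightarrow> cnt S t \<le> max_simul S"
proof -
  assume t: "t \<le> horizon S"
  have fin: "finite ((\<lambda>t. card {i. i < length S \<and> present S i t}) ` {t. t \<le> horizon S})"
  proof (rule finite_subset[of _ "{..length S}"])
    show "(\<lambda>t. card {i. i < length S \<and> present S i t}) ` {t. t \<le> horizon S} \<subseteq> {..length S}"
    proof
      fix z assume "z \<in> (\<lambda>t. card {i. i < length S \<and> present S i t}) ` {t. t \<le> horizon S}"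
      then obtain t where "z = card {i. i < length S \<and> present S i t}" by auto
      moreover have "card {i. i < length S \<and> present S i t} \<le> card {..<length S}"
        by (intro card_mono) auto
      ultimately show "z \<in> {..length S}" by simp
    qed
  qed simp
  show ?thesis unfolding cnt_def max_simul_def using t by (intro Max_ge[OF fin]) auto
qed

lemma d_min_fin: "finite ({dist_bd (X i) | i. i < length S \<and> present S i t}
      \<union> {dist (X i) (X j) | i j. i < length S \<and> j < length S \<and> i \<noteq> j
                              \<and> present S i t \<and> present S j t})"
proof -
  have "{dist_bd (X i) | i. i < length S \<and> present S i t} \<subseteq> (\<lambda>i. dist_bd (X i)) ` {..<length S}"
    by auto
  moreover have "{dist (X i) (X j) | i j. i < length S \<and> j < length S \<and> i \<noteq> j
                              \<and> present S i t \<and> present S j t}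
     \<subseteq> (\<lambda>(i,j). dist (X i) (X j)) ` ({..<length S} \<times> {..<length S})"
    by auto
  ultimately show ?thesis by (meson finite_SigmaI finite_UnI finite_imageI finite_lessThan finite_subset)
qed

lemma d_min_le_bd: "i < length S \<Longrightarrow> present S i t \<Longrightarrow> d_min S X t \<le> dist_bd (X i)"
  unfolding d_min_def by (rule Min_le[OF d_min_fin]) auto

lemma d_min_le_pair: "i < length S \<Longrightarrow> j < length S \<Longrightarrow> i \<noteq> j \<Longrightarrow> present S i t \<Longrightarrow> present S j t
   \<Longrightarrow> d_min S X t \<le> dist (X i) (X j)"
  unfolding d_min_def by (rule Min_le[OF d_min_fin], rule UnI2, intro CollectI exI[of _ i] exI[of _ j]) simp

lemma d_min_ge:
  assumes "i0 < length S" "present S i0 t"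
    and "\<And>i. i < length S \<Longrightarrow> present S i t \<Longrightarrow> v \<le> dist_bd (X i)"
    and "\<And>i j. i < length S \<Longrightarrow> j < length S \<Longrightarrow> i \<noteq> j \<Longrightarrow> present S i t \<Longrightarrow> present S j t
          \<Longrightarrow> v \<le> dist (X i) (X j)"
  shows "v \<le> d_min S X t"
  unfolding d_min_def
proof (rule Min.boundedI[OF d_min_fin])
  show "{dist_bd (X i) | i. i < length S \<and> present S i t}
      \<union> {dist (X i) (X j) | i j. i < length S \<and> j < length S \<and> i \<noteq> j
                              \<and> present S i t \<and> present S j t} \<noteq> {}" using assms(1,2) by auto
next
  fix z assume "z \<in> {dist_bd (X i) | i. i < length S \<and> present S i t}
      \<union> {dist (X i) (X j) | i j. i < length S \<and> j < length S \<and> i \<noteq> j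
                              \<and> present S i t \<and> present S j t}"
  then show "v \<le> z" using assms(3,4) by auto
qed

lemma dist_bd_nonneg: "0 \<le> dist_bd x" unfolding dist_bd_def by simp

lemma d_min_nonneg: "i0 < length S \<Longrightarrow> present S i0 t \<Longrightarrow> 0 \<le> d_min S X t"
  by (rule d_min_ge[of i0]) (auto simp: dist_bd_nonneg)

definition Tset :: "(real \<times> real) list \<Rightarrow> real set" where
  "Tset S = {t. t \<le> horizon S \<and> (\<exists>i<length S. present S i t)}"

lemma min_dmin_le: "t \<in> Tset S \<Longrightarrow> min_dmin S X \<le> d_min S X t"
  unfolding min_dmin_def Tset_def[symmetric]
proof (rule cInf_lower)
  show "bdd_below (d_min S X ` Tset S)"
  proof (rule bdd_belowI[of _ 0])
    fix z assume "z \<in> d_min S X ` Tset S"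
    then obtain t i where "z = d_min S X t" "i < length S" "present S i t" by (auto simp: Tset_def)
    then show "0 \<le> z" using d_min_nonneg by blast
  qed
qed simp

lemma min_dmin_ge:
  assumes "Tset S \<noteq> {}" "\<And>t. t \<in> Tset S \<Longrightarrow> v \<le> d_min S X t"
  shows "v \<le> min_dmin S X"
  unfolding min_dmin_def Tset_def[symmetric]
proof (rule cInf_greatest)
  show "d_min S X ` Tset S \<noteq> {}" using assms(1) by simp
next
  fix z assume "z \<in> d_min S X ` Tset S"
  then obtain t where "t \<in> Tset S" "z = d_min S X t" by blast
  then show "v \<le> z" using assms(2) by simp
qed

lemma OPT_le:
  assumes "\<And>Y. (\<forall>i<length S. Y i \<in> {0..1}) \<Longrightarrow> min_dmin S Y \<le> b"
  shows "OPT_A S \<le> b"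
  unfolding OPT_A_def
proof (rule cSup_least)
  have "(\<lambda>_. 0::real) \<in> {X. \<forall>i<length S. X i \<in> {0..1}}" by simp
  then have "min_dmin S (\<lambda>_. 0) \<in> min_dmin S ` {X. \<forall>i<length S. X i \<in> {0..1}}" by (rule imageI)
  then show "min_dmin S ` {X. \<forall>i<length S. X i \<in> {0..1}} \<noteq> {}" by (metis equals0D)
next
  fix z assume "z \<in> min_dmin S ` {X. \<forall>i<length S. X i \<in> {0..1}}"
  then obtain Y where "\<forall>i<length S. Y i \<in> {0..1}" "z = min_dmin S Y" by (auto simp del: atLeastAtMost_iff)
  then show "z \<le> b" using assms by simp
qed


lemma pigeon:
  fixes F :: "real set" and a b D :: real
  assumes "finite F" "\<And>x. x \<in> F \<Longrightarrow> D \<le> x - a \<and> D \<le> b - x"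
    and "\<And>x y. x \<in> F \<Longrightarrow> y \<in> F \<Longrightarrow> x \<noteq> y \<Longrightarrow> D \<le> \<bar>x - y\<bar>"
    and "D \<le> b - a"
  shows "real (card F + 1) * D \<le> b - a"
  using assms
proof (induction "card F" arbitrary: F b)
  case 0
  then show ?case by simp
next
  case (Suc n)
  then have ne: "F \<noteq> {}" by auto
  define x where "x = Max F"
  have xF: "x \<in> F" using Max_in[OF Suc.prems(1) ne] x_def by simp
  define F' where "F' = F - {x}"
  have fin': "finite F'" using Suc.prems(1) F'_def by simp
  have c': "n = card F'" using Suc.hyps(2) xF Suc.prems(1) F'_def by simp
  have IH: "real (card F' + 1) * D \<le> x - a"
  proof (rule Suc.hyps(1)[OF c' fin'])
    fix y assume y: "y \<in> F'"
    then have "y \<in> F" "y \<noteq> x" using F'_def by auto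
    moreover have "y \<le> x" using Max_ge[OF Suc.prems(1) \<open>y \<in> F\<close>] x_def by simp
    ultimately have "D \<le> \<bar>y - x\<bar>" "y \<le> x" using Suc.prems(3)[of y x] xF by auto
    then show "D \<le> y - a \<and> D \<le> x - y" using Suc.prems(2)[OF \<open>y\<in>F\<close>] by auto
  next
    fix y z assume "y \<in> F'" "z \<in> F'" "y \<noteq> z"
    then show "D \<le> \<bar>y - z\<bar>" using Suc.prems(3) F'_def by auto
  next
    show "D \<le> x - a" using Suc.prems(2)[OF xF] by simp
  qed
  have "card F = card F' + 1" using c' Suc.hyps(2) by simp
  then have "real (card F + 1) * D = real (card F' + 1) * D + D" by (simp add: algebra_simps)
  also have "\<dots> \<le> (x - a) + (b - x)" using IH Suc.prems(2)[OF xF] by linarith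
  finally show ?case by simp
qed

lemma opt_point:
  assumes "\<forall>i<length S. Y i \<in> {0..1}" "t1 \<le> horizon S" "1 \<le> k" "k \<le> cnt S t1"
  shows "min_dmin S Y \<le> 1 / real (k+1)"
proof -
  define P where "P = {i. i < length S \<and> present S i t1}"
  have finP: "finite P" unfolding P_def by simp
  have "card P \<ge> 1" using assms(3,4) unfolding cnt_def P_def by simp
  then obtain i0 where i0: "i0 \<in> P" by (metis card.empty ex_in_conv not_one_le_zero)
  then have i0': "i0 < length S" "present S i0 t1" unfolding P_def by auto
  have T: "t1 \<in> Tset S" unfolding Tset_def using assms(2) i0' by auto
  define D where "D = d_min S Y t1"
  have D0: "0 \<le> D" unfolding D_def using d_min_nonneg[OF i0'] .
  have "D \<le> 1 / real (k+1)"
  proof (cases "inj_on Y P")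
    case False
    then obtain i j where ij: "i \<in> P" "j \<in> P" "i \<noteq> j" "Y i = Y j" unfolding inj_on_def by blast
    then have "D \<le> dist (Y i) (Y j)" unfolding D_def P_def by (intro d_min_le_pair) auto
    then have "D \<le> 0" using ij by simp
    then show ?thesis by (smt (verit) divide_nonneg_nonneg of_nat_0_le_iff)
  next
    case True
    define F where "F = Y ` P"
    have cardF: "card F = card P" unfolding F_def using True by (simp add: card_image)
    have bd: "D \<le> x - 0 \<and> D \<le> 1 - x" if "x \<in> F" for x
    proof -
      obtain i where i: "i \<in> P" "x = Y i" using \<open>x \<in> F\<close> F_def by auto
      then have "D \<le> dist_bd (Y i)" unfolding D_def P_def by (intro d_min_le_bd) auto
      moreover have "Y i \<in> {0..1}" using assms(1) i unfolding P_def by auto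
      ultimately show ?thesis using i unfolding dist_bd_def dist_real_def by auto
    qed
    have "real (card F + 1) * D \<le> 1 - 0"
    proof (rule pigeon)
      show "finite F" unfolding F_def using finP by simp
    next
      fix x y assume "x \<in> F" "y \<in> F" "x \<noteq> y"
      then obtain i j where "i \<in> P" "j \<in> P" "x = Y i" "y = Y j" using F_def by auto
      moreover then have "i \<noteq> j" using \<open>x \<noteq> y\<close> by auto
      ultimately have "D \<le> dist (Y i) (Y j)" unfolding D_def P_def by (intro d_min_le_pair) auto
      then show "D \<le> \<bar>x - y\<bar>" using \<open>x = Y i\<close> \<open>y = Y j\<close> by (simp add: dist_real_def)
    next
      have "Y i0 \<in> F" using i0 F_def by simp
      then show "D \<le> 1 - 0" using bd by force
    qed (use bd in auto)
    moreover have "real (k + 1) * D \<le> real (card F + 1) * D"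
      using cardF assms(4) D0 unfolding cnt_def P_def[symmetric] by (intro mult_right_mono) auto
    ultimately have "real (k+1) * D \<le> 1" by simp
    then show ?thesis by (simp add: field_simps)
  qed
  then show ?thesis using min_dmin_le[OF T, of Y] D_def by simp
qed


lemma nth_notin_take:
  assumes "distinct xs" "k < length xs"
  shows "xs!k \<notin> set (take k xs)"
proof -
  have d: "xs = take k xs @ xs!k # drop (Suc k) xs" using assms(2) by (simp add: id_take_nth_drop)
  have "distinct (take k xs @ xs!k # drop (Suc k) xs)" using assms(1) d by metis
  then show ?thesis by simp
qed

lemma hd_filter_take:
  assumes "distinct xs" "k < length xs"
  shows "hd (filter (\<lambda>q. q \<notin> set (take k xs)) xs) = xs!k"
proof -
  define P where "P = (\<lambda>q. q \<notin> set (take k xs))"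
  have d: "xs = take k xs @ xs!k # drop (Suc k) xs" using assms(2) by (simp add: id_take_nth_drop)
  have "distinct (take k xs @ xs!k # drop (Suc k) xs)" using assms(1) d by metis
  then have nk: "xs!k \<notin> set (take k xs)" by simp
  have "filter P xs = filter P (take k xs) @ filter P (xs!k # drop (Suc k) xs)"
    using d filter_append by metis
  moreover have "filter P (take k xs) = []" unfolding P_def by (simp add: filter_empty_conv)
  ultimately have "filter P xs = xs!k # filter P (drop (Suc k) xs)" using nk P_def by simp
  then show ?thesis unfolding P_def by simp
qed

context
  fixes S :: "(real \<times> real) list" and X :: "nat \<Rightarrow> real" and tau :: "real list" and r :: nat
  assumes vi: "valid_instance S" and ms: "max_simul S \<le> r"
    and ar: "alg_run (set tau) tau S X" and dt: "distinct tau" and lt: "length tau = r"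
begin

lemma step:
  assumes i: "i < length S" and H: "X ` {..<i} = set (take k tau)" and k: "k \<le> r"
  shows "X i \<notin> X ` {j. j < i \<and> fst (S!i) \<le> snd (S!j)}
     \<and> (X i \<in> X ` {..<i} \<or> (k < r \<and> X i = tau!k \<and> k+1 \<le> cnt S (fst (S!i))))"
proof -
  define Oi where "Oi = {j. j < i \<and> fst (S!i) \<le> snd (S!j)}"
  define Hs where "Hs = X ` {..<i}"
  define Occ where "Occ = X ` Oi"
  have run: "(Hs - Occ \<noteq> {} \<longrightarrow> X i \<in> Hs - Occ)
       \<and> (Hs - Occ = {} \<and> \<not> set tau \<subseteq> Hs \<longrightarrow> X i = hd (filter (\<lambda>q. q \<notin> Hs) tau))"
    using ar i unfolding alg_run_def Let_def Hs_def Occ_def Oi_def by blast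
  show ?thesis
  proof (cases "Hs - Occ = {}")
    case False
    then show ?thesis using run unfolding Hs_def Occ_def Oi_def by auto
  next
    case True
    have OccH: "Occ \<subseteq> Hs" unfolding Occ_def Hs_def Oi_def by auto
    have HOcc: "Hs = Occ" using True OccH by auto
    have cH: "card Hs = k" using H dt k lt unfolding Hs_def by (simp add: distinct_card)
    have finO: "finite Oi" unfolding Oi_def by simp
    have "k \<le> card Oi" using cH HOcc card_image_le[OF finO, of X] unfolding Occ_def by simp
    moreover have "i \<notin> Oi" unfolding Oi_def by simp
    ultimately have k1: "k + 1 \<le> card (insert i Oi)" using finO by simp
    have sub: "insert i Oi \<subseteq> {j. j < length S \<and> present S j (fst (S!i))}"
    proof
      fix j assume "j \<in> insert i Oi"
      then show "j \<in> {j. j < length S \<and> present S j (fst (S!i))}"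
      proof
        assume "j = i"
        then show ?thesis using vi i unfolding valid_instance_def present_def by fastforce
      next
        assume "j \<in> Oi"
        then have "j < i" "fst (S!i) \<le> snd (S!j)" unfolding Oi_def by auto
        moreover have "fst (S!j) \<le> fst (S!i)" using sorted_fst[OF vi, of j i] i \<open>j<i\<close> by simp
        ultimately show ?thesis using i unfolding present_def by simp
      qed
    qed
    have "card (insert i Oi) \<le> cnt S (fst (S!i))" unfolding cnt_def by (intro card_mono[OF _ sub]) simp
    with k1 have kc: "k + 1 \<le> cnt S (fst (S!i))" by simp
    have "fst (S!i) \<le> horizon S"
      using vi i hor_ge[OF i] unfolding valid_instance_def by force
    then have "cnt S (fst (S!i)) \<le> r" using cnt_le_max ms by (meson order_trans)
    with kc have kr: "k < r" by simp
    have "\<not> set tau \<subseteq> Hs"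
    proof
      assume "set tau \<subseteq> Hs"
      then have "card (set tau) \<le> card Hs" by (intro card_mono) (simp_all add: Hs_def)
      then show False using cH dt lt kr by (simp add: distinct_card)
    qed
    then have Xi: "X i = tau!k" using run True hd_filter_take[OF dt, of k] kr lt H
      unfolding Hs_def by simp
    have "tau!k \<notin> set (take k tau)" using nth_notin_take[OF dt, of k] kr lt by simp
    then have "X i \<notin> Occ" using Xi H OccH unfolding Hs_def by auto
    then show ?thesis using Xi kr kc unfolding Occ_def Oi_def by simp
  qed
qed


lemma hor0: "0 \<le> horizon S"
proof -
  have "length S > 0" "fst (S!0) = 0" "fst (S!0) < snd (S!0)" using vi unfolding valid_instance_def by auto
  then show ?thesis using hor_ge[of 0 S] by linarith
qed

lemma invariant:
  "i \<le> length S \<Longrightarrow> \<exists>k\<le>r. X ` {..<i} = set (take k tau) \<and> (\<exists>t1. t1 \<le> horizon S \<and> k \<le> cnt S t1)"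
proof (induction i)
  case 0
  show ?case using hor0 by (intro exI[of _ 0]) auto
next
  case (Suc i)
  then obtain k t1 where k: "k \<le> r" "X ` {..<i} = set (take k tau)" "t1 \<le> horizon S" "k \<le> cnt S t1"
    by auto
  have i: "i < length S" using Suc.prems by simp
  have ins: "X ` {..<Suc i} = insert (X i) (X ` {..<i})" by (simp add: lessThan_Suc)
  from step[OF i k(2,1)] consider "X i \<in> X ` {..<i}" | "k < r" "X i = tau!k" "k+1 \<le> cnt S (fst (S!i))"
    by blast
  then show ?case
  proof cases
    case 1
    then show ?thesis using k ins by (intro exI[of _ k]) auto
  next
    case 2
    have "take (Suc k) tau = take k tau @ [tau!k]" using 2 lt by (simp add: take_Suc_conv_app_nth)
    then have "X ` {..<Suc i} = set (take (k+1) tau)" using ins k 2 by simp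
    moreover have "fst (S!i) \<le> horizon S"
      using vi i hor_ge[OF i] unfolding valid_instance_def by force
    ultimately show ?thesis using 2 by (intro exI[of _ "k+1"]) auto
  qed
qed

lemma distinct_pos:
  assumes "i < j" "j < length S" "present S i t" "present S j t"
  shows "X i \<noteq> X j"
proof -
  obtain k where k: "k \<le> r" "X ` {..<j} = set (take k tau)" using invariant[of j] assms by auto
  have "X j \<notin> X ` {jj. jj < j \<and> fst (S!j) \<le> snd (S!jj)}" using step[OF assms(2) k(2,1)] by blast
  moreover have "i \<in> {jj. jj < j \<and> fst (S!j) \<le> snd (S!jj)}" using assms unfolding present_def by auto
  ultimately have "X i \<in> X ` {jj. jj < j \<and> fst (S!j) \<le> snd (S!jj)}" "X j \<notin> X ` {jj. jj < j \<and> fst (S!j) \<le> snd (S!jj)}"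
    by (blast intro: imageI)+
  then show ?thesis by metis
qed

lemma alg_bound:
  fixes sg :: real
  assumes sg: "sg > 0"
    and bd: "\<And>K p. K \<le> r \<Longrightarrow> p \<in> set (take K tau) \<Longrightarrow> 1 / (2*sg*real (K+1)) \<le> dist_bd p"
    and pr: "\<And>K p q. K \<le> r \<Longrightarrow> p \<in> set (take K tau) \<Longrightarrow> q \<in> set (take K tau) \<Longrightarrow> p \<noteq> q
           \<Longrightarrow> 1 / (2*sg*real (K+1)) \<le> dist p q"
  shows "OPT_A S \<le> 2 * sg * min_dmin S X"
proof -
  obtain K t1 where K: "K \<le> r" "X ` {..<length S} = set (take K tau)" "t1 \<le> horizon S" "K \<le> cnt S t1"
    using invariant[of "length S"] by auto
  have n0: "0 < length S" using vi unfolding valid_instance_def by simp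
  have "X 0 \<in> set (take K tau)" using K(2) n0 by auto
  then have K1: "1 \<le> K" by (cases K) auto
  define d where "d = 1 / (2*sg*real (K+1))"
  have opt: "OPT_A S \<le> 1 / real (K+1)"
    by (rule OPT_le) (rule opt_point[OF _ K(3) K1 K(4)])
  have pos: "X i \<in> set (take K tau)" if "i < length S" for i using K(2) that by auto
  have "d \<le> min_dmin S X"
  proof (rule min_dmin_ge)
    have "fst (S!0) = 0" "fst (S!0) < snd (S!0)" using vi unfolding valid_instance_def by auto
    then have "present S 0 0" unfolding present_def by simp
    then show "Tset S \<noteq> {}" unfolding Tset_def using hor0 n0 by auto
  next
    fix t assume "t \<in> Tset S"
    then obtain i0 where i0: "i0 < length S" "present S i0 t" unfolding Tset_def by auto
    show "d \<le> d_min S X t"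
    proof (rule d_min_ge[OF i0])
      fix i assume "i < length S" "present S i t"
      then show "d \<le> dist_bd (X i)" unfolding d_def using bd[OF K(1) pos] by simp
    next
      fix i j assume ij: "i < length S" "j < length S" "i \<noteq> j" "present S i t" "present S j t"
      have "X i \<noteq> X j"
      proof (cases "i < j")
        case True then show ?thesis using distinct_pos ij by blast
      next
        case False then have "j < i" using ij by simp
        then show ?thesis using distinct_pos ij by metis
      qed
      then show "d \<le> dist (X i) (X j)" unfolding d_def using pr[OF K(1) pos pos] ij by simp
    qed
  qed
  moreover have "1 / real (K+1) = 2 * sg * d"
  proof -
    have "sg * real (K+1) \<noteq> 0" using sg by simp
    then show ?thesis unfolding d_def by (simp add: field_simps)
  qed
  ultimately show ?thesis using opt sg by (smt (verit) mult_left_mono)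
qed

end


lemma set_idx: "set (idxu l l) = {1..2^l - 1}"
proof -
  have "set (idxu l l) = (\<lambda>m. m * 2^(l-l)) ` {m. 0<m \<and> m<2^l}" by (rule set_idxu) simp
  also have "\<dots> = {1..2^l - 1}" by force
  finally show ?thesis .
qed

lemma distinct_idx: "distinct (idxu l l)"
  by (rule card_distinct) (simp add: set_idx length_idxu)

lemma aux_min: "(0::real) < d \<Longrightarrow> d \<le> x \<Longrightarrow> d \<le> 1 - x \<Longrightarrow> d \<le> min \<bar>x - 0\<bar> \<bar>x - 1\<bar>"
  by auto

lemma bounds_main:
  assumes l: "0 < l" and K: "K \<le> 2^l - 1" and p: "p \<in> set (take K (map (qpos (2^l - 1)) (idxu l l)))"
  shows "1 / (2 * sigma_r (2^l - 1) * real (K+1)) \<le> dist_bd p"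
proof -
  let ?r = "(2::nat)^l - 1"
  let ?d = "1 / (2 * sigma_r ?r * real (K+1))"
  obtain u where u: "u \<in> set (take K (idxu l l))" "p = qpos ?r u" using p by (auto simp: take_map)
  have "u \<in> set (idxu l l)" using u(1) by (meson in_set_takeD)
  then have u0: "0 < u" "u < 2^l" unfolding set_idx by auto
  have t: "qpos ?r (2^l) = 1" using qpos_top[of ?r] by simp
  have a: "?d \<le> qpos ?r u - qpos ?r 0" using sep_main[OF l K, of 0 u] u u0 by simp
  have b: "?d \<le> qpos ?r (2^l) - qpos ?r u" using sep_main[OF l K, of u "2^l"] u u0 by simp
  have "0 < ?d" using sigma_pos[of ?r] by simp
  moreover have "?d \<le> qpos ?r u" "?d \<le> 1 - qpos ?r u" using a b t qpos_0[of ?r] by simp_all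
  ultimately show ?thesis using u(2) unfolding dist_bd_def dist_real_def
    using aux_min by blast
qed

lemma pairs_main:
  assumes l: "0 < l" and K: "K \<le> 2^l - 1"
    and p: "p \<in> set (take K (map (qpos (2^l - 1)) (idxu l l)))"
    and q: "q \<in> set (take K (map (qpos (2^l - 1)) (idxu l l)))" and pq: "p \<noteq> q"
  shows "1 / (2 * sigma_r (2^l - 1) * real (K+1)) \<le> dist p q"
proof -
  let ?r = "(2::nat)^l - 1"
  let ?d = "1 / (2 * sigma_r ?r * real (K+1))"
  obtain u where u: "u \<in> set (take K (idxu l l))" "p = qpos ?r u" using p by (auto simp: take_map)
  obtain v where v: "v \<in> set (take K (idxu l l))" "q = qpos ?r v" using q by (auto simp: take_map)
  have "u \<noteq> v" using pq u v by auto
  then consider "u < v" | "v < u" by linarith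
  then show ?thesis
  proof cases
    case 1
    then have "?d \<le> qpos ?r v - qpos ?r u" using sep_main[OF l K, of u v] u v by simp
    then show ?thesis using u v unfolding dist_real_def by simp
  next
    case 2
    then have "?d \<le> qpos ?r u - qpos ?r v" using sep_main[OF l K, of v u] u v by simp
    then show ?thesis using u v unfolding dist_real_def by simp
  qed
qed

theorem lemma2:
  fixes l :: nat
  assumes "l > 0"
  shows "\<exists>tau. distinct tau \<and> set tau = Qset (2^l - 1) \<and>
           (\<forall>S X. valid_instance S \<and> max_simul S \<le> 2^l - 1
                   \<and> alg_run (Qset (2^l - 1)) tau S X
              \<longrightarrow> OPT_A S \<le> 2 * sigma_r (2^l - 1) * min_dmin S X)"
proof (intro exI conjI allI impI)
  let ?r = "(2::nat)^l - 1"
  let ?tau = "map (qpos ?r) (idxu l l)"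
  have "inj_on (qpos ?r) (set (idxu l l))" using inj_qpos[of ?r] by (rule inj_on_subset) simp
  then show dt: "distinct ?tau" using distinct_idx[of l] by (simp add: distinct_map)
  show st: "set ?tau = Qset ?r" unfolding Qset_def by (simp add: set_idx)
  have lt: "length ?tau = ?r" by (simp add: length_idxu)
  fix S X
  assume h: "valid_instance S \<and> max_simul S \<le> ?r \<and> alg_run (Qset ?r) ?tau S X"
  then have ar: "alg_run (set ?tau) ?tau S X" using st by simp
  show "OPT_A S \<le> 2 * sigma_r ?r * min_dmin S X"
  proof (rule alg_bound[where S=S and X=X and tau="?tau" and r="?r"])
    show "valid_instance S" "max_simul S \<le> ?r" using h by auto
  qed (use ar dt lt sigma_pos bounds_main[OF assms] pairs_main[OF assms] in auto)
qed

end
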